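(* For every $n\ge1$, no proper subset of $F_n$ that contains both $a_1$ and $a_{5n+3}$ is full. Consequently (since $F_n$ is full) the geodesic between $a_1$ and $a_{5n+3}$ in $F_n$, i.e. the smallest full subset of $F_n$ containing both points, is all of $F_n$, which has $5n+4$ points.
   Context: Let $X_1,X_2,X_3$ be pairwise disjoint nonempty sets and $\Omega=X_1\times X_2\times X_3$, with projections $\Pi_i:\Omega\to X_i$. A set $S\subset\Omega$ is good if every function $f:S\to\mathbb C$ can be written $f(w_1,w_2,w_3)=u_1(w_1)+u_2(w_2)+u_3(w_3)$ for all $(w_1,w_2,w_3)\in S$, for some functions $u_i:X_i\to\mathbb C$. A set $S$ is full if it is a maximal good subset of $\Pi_1S\times\Pi_2S\times\Pi_3S$. Construction: fix pairwise distinct elements $x_1,y_1,\alpha_{5k-4},\alpha_{5k-1}$ ($k\ge1$) of $X_1$; pairwise distinct elements $x_2,y_2,\alpha_{5k-3},\alpha_{5k}$ ($k\ge1$) of $X_2$; pairwise distinct elements $x_3,z_3,\alpha_{5k-2}$ ($k\ge1$) of $X_3$. Set the convention $\alpha_{-3}:=y_2$, $\alpha_{-2}:=z_3$. Define $a_1=(x_1,x_2,x_3)$, $a_2=(y_1,y_2,x_3)$, $a_3=(y_1,x_2,z_3)$ and for $n\ge1$: $a_{5n-1}=(\alpha_{5n-4},\alpha_{5n-3},\alpha_{5n-2})$, $a_{5n}=(\alpha_{5n-1},\alpha_{5n},\alpha_{5n-2})$, $a_{5n+1}=(\alpha_{5n-4},\alpha_{5n},\alpha_{5n-7})$, $a_{5n+2}=(\alpha_{5n-1},\alpha_{5n-3},x_3)$,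 $a_{5n+3}=(x_1,\alpha_{5n-8},\alpha_{5n-2})$. Let $D_n=\{a_1,\dots,a_{5n+3}\}$, $b_n=(\alpha_{5n-1},y_2,z_3)$ and $F_n=D_n\cup\{b_n\}$. *)

theory Defs
  imports Complex_Main
begin

text \<open>The three disjoint sets X1, X2, X3 are modelled as three (arbitrary) types
  'a, 'b, 'c; Omega = 'a \<times> 'b \<times> 'c, with projections fst, fst o snd, snd o snd.\<close>

definition good :: "('a \<times> 'b \<times> 'c) set \<Rightarrow> bool" where
  "good S \<longleftrightarrow> (\<forall>f :: 'a \<times> 'b \<times> 'c \<Rightarrow> complex.
      \<exists>(u1 :: 'a \<Rightarrow> complex) (u2 :: 'b \<Rightarrow> complex) (u3 :: 'c \<Rightarrow> complex).
        \<forall>w1 w2 w3. (w1, w2, w3) \<in> S \<longrightarrow> f (w1, w2, w3) = u1 w1 + u2 w2 + u3 w3)"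

definition proj1 :: "('a \<times> 'b \<times> 'c) set \<Rightarrow> 'a set" where
  "proj1 S = (\<lambda>w. fst w) ` S"
definition proj2 :: "('a \<times> 'b \<times> 'c) set \<Rightarrow> 'b set" where
  "proj2 S = (\<lambda>w. fst (snd w)) ` S"
definition proj3 :: "('a \<times> 'b \<times> 'c) set \<Rightarrow> 'c set" where
  "proj3 S = (\<lambda>w. snd (snd w)) ` S"

definition full :: "('a \<times> 'b \<times> 'c) set \<Rightarrow> bool" where
  "full S \<longleftrightarrow> good S \<and>
     (\<forall>T. S \<subset> T \<and> T \<subseteq> proj1 S \<times> proj2 S \<times> proj3 S \<longrightarrow> \<not> good T)"

text \<open>Index sets of the alpha's (integer indices): alpha_{5k-4}, alpha_{5k-1} in X1,
  alpha_{5k-3}, alpha_{5k} in X2, alpha_{5k-2} in X3, for k \<ge> 1.\<close>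
definition I1 :: "int set" where "I1 = {i. \<exists>k\<ge>1. i = 5*k - 4 \<or> i = 5*k - 1}"
definition I2 :: "int set" where "I2 = {i. \<exists>k\<ge>1. i = 5*k - 3 \<or> i = 5*k}"
definition I3 :: "int set" where "I3 = {i. \<exists>k\<ge>1. i = 5*k - 2}"

text \<open>Convention alpha_{-3} := y2, alpha_{-2} := z3.\<close>
definition A2 :: "'b \<Rightarrow> (int \<Rightarrow> 'b) \<Rightarrow> int \<Rightarrow> 'b" where
  "A2 y2 \<alpha>2 i = (if i = -3 then y2 else \<alpha>2 i)"
definition A3 :: "'c \<Rightarrow> (int \<Rightarrow> 'c) \<Rightarrow> int \<Rightarrow> 'c" where
  "A3 z3 \<alpha>3 i = (if i = -2 then z3 else \<alpha>3 i)"

text \<open>The points a_m (m \<ge> 1).  For m \<ge> 4 the residue of m mod 5 determines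
  which of a_{5n-1}, a_{5n}, a_{5n+1}, a_{5n+2}, a_{5n+3} (n \<ge> 1) m is.\<close>
definition apt :: "'a \<Rightarrow> 'a \<Rightarrow> 'b \<Rightarrow> 'b \<Rightarrow> 'c \<Rightarrow> 'c \<Rightarrow>
    (int \<Rightarrow> 'a) \<Rightarrow> (int \<Rightarrow> 'b) \<Rightarrow> (int \<Rightarrow> 'c) \<Rightarrow> nat \<Rightarrow> 'a \<times> 'b \<times> 'c" where
  "apt x1 y1 x2 y2 x3 z3 \<alpha>1 \<alpha>2 \<alpha>3 m =
    (let k = int m; B2 = A2 y2 \<alpha>2; B3 = A3 z3 \<alpha>3 in
     if m = 1 then (x1, x2, x3)
     else if m = 2 then (y1, y2, x3)
     else if m = 3 then (y1, x2, z3)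
     else if m mod 5 = 4 then (let n = (k + 1) div 5 in
       (\<alpha>1 (5*n - 4), B2 (5*n - 3), B3 (5*n - 2)))
     else if m mod 5 = 0 then (let n = k div 5 in
       (\<alpha>1 (5*n - 1), B2 (5*n), B3 (5*n - 2)))
     else if m mod 5 = 1 then (let n = (k - 1) div 5 in
       (\<alpha>1 (5*n - 4), B2 (5*n), B3 (5*n - 7)))
     else if m mod 5 = 2 then (let n = (k - 2) div 5 in
       (\<alpha>1 (5*n - 1), B2 (5*n - 3), x3))
     else (let n = (k - 3) div 5 in
       (x1, B2 (5*n - 8), B3 (5*n - 2))))"

definition Dset :: "'a \<Rightarrow> 'a \<Rightarrow> 'b \<Rightarrow> 'b \<Rightarrow> 'c \<Rightarrow> 'c \<Rightarrow>
    (int \<Rightarrow> 'a) \<Rightarrow> (int \<Rightarrow> 'b) \<Rightarrow> (int \<Rightarrow> 'c) \<Rightarrow> nat \<Rightarrow> ('a \<times> 'b \<times> 'c) set" where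
  "Dset x1 y1 x2 y2 x3 z3 \<alpha>1 \<alpha>2 \<alpha>3 n =
     apt x1 y1 x2 y2 x3 z3 \<alpha>1 \<alpha>2 \<alpha>3 ` {1 .. 5*n + 3}"

definition bpt :: "'b \<Rightarrow> 'c \<Rightarrow> (int \<Rightarrow> 'a) \<Rightarrow> nat \<Rightarrow> 'a \<times> 'b \<times> 'c" where
  "bpt y2 z3 \<alpha>1 n = (\<alpha>1 (5 * int n - 1), y2, z3)"

definition Fset :: "'a \<Rightarrow> 'a \<Rightarrow> 'b \<Rightarrow> 'b \<Rightarrow> 'c \<Rightarrow> 'c \<Rightarrow>
    (int \<Rightarrow> 'a) \<Rightarrow> (int \<Rightarrow> 'b) \<Rightarrow> (int \<Rightarrow> 'c) \<Rightarrow> nat \<Rightarrow> ('a \<times> 'b \<times> 'c) set" where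
  "Fset x1 y1 x2 y2 x3 z3 \<alpha>1 \<alpha>2 \<alpha>3 n =
     insert (bpt y2 z3 \<alpha>1 n) (Dset x1 y1 x2 y2 x3 z3 \<alpha>1 \<alpha>2 \<alpha>3 n)"

end

theory Submission
  imports Defs
begin

lemma homog:
  fixes a :: "'e \<Rightarrow> 'x \<Rightarrow> 'f::field"
  assumes "finite E" "finite X" "card E < card X"
  shows "\<exists>\<phi>. (\<forall>e\<in>E. (\<Sum>x\<in>X. a e x * \<phi> x) = 0) \<and> (\<exists>x\<in>X. \<phi> x \<noteq> 0)"
  using assms
proof (induction E arbitrary: X a rule: finite_induct)
  case empty
  then obtain x0 where "x0 \<in> X" by (metis card.empty card_gt_0_iff equals0I)
  then show ?case by (intro exI[of _ "\<lambda>x. if x = x0 then 1 else 0"]) auto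
next
  case (insert e E)
  show ?case
  proof (cases "\<forall>x\<in>X. a e x = 0")
    case True
    have "card E < card X" using insert by simp
    then obtain \<phi> where "\<forall>e\<in>E. (\<Sum>x\<in>X. a e x * \<phi> x) = 0" "\<exists>x\<in>X. \<phi> x \<noteq> 0"
      using insert.IH[OF insert.prems(1)] by blast
    then show ?thesis using True by (intro exI[of _ \<phi>]) auto
  next
    case False
    then obtain x0 where x0: "x0 \<in> X" "a e x0 \<noteq> 0" by auto
    define X' where "X' = X - {x0}"
    have fX': "finite X'" using insert.prems X'_def by auto
    have cX': "card X' = card X - 1" using x0 insert.prems X'_def by auto
    have "card E < card X'" using insert cX' by simp
    define a' where "a' = (\<lambda>e' x. a e' x - a e' x0 * a e x / a e x0)"
    obtain \<psi> where \<psi>: "\<forall>e'\<in>E. (\<Sum>x\<in>X'. a' e' x * \<psi> x) = 0" "\<exists>x\<in>X'. \<psi> x \<noteq> 0"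
      using insert.IH[OF fX' \<open>card E < card X'\<close>] by blast
    define s where "s = (\<Sum>y\<in>X'. a e y * \<psi> y)"
    define \<phi> where "\<phi> = (\<lambda>x. if x = x0 then - s / a e x0 else \<psi> x)"
    have split: "(\<Sum>x\<in>X. b x * \<phi> x) = b x0 * (- s / a e x0) + (\<Sum>x\<in>X'. b x * \<psi> x)" for b
    proof -
      have "X = insert x0 X'" using x0 X'_def by auto
      have "(\<Sum>x\<in>X. b x * \<phi> x) = b x0 * \<phi> x0 + (\<Sum>x\<in>X'. b x * \<phi> x)"
        using sum.remove[OF insert.prems(1) x0(1)] X'_def by simp
      also have "(\<Sum>x\<in>X'. b x * \<phi> x) = (\<Sum>x\<in>X'. b x * \<psi> x)"
        by (rule sum.cong) (auto simp: \<phi>_def X'_def)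
      finally show ?thesis by (simp add: \<phi>_def)
    qed
    have "(\<Sum>x\<in>X. a e x * \<phi> x) = 0" using split[of "a e"] x0 by (simp add: s_def)
    moreover have "(\<Sum>x\<in>X. a e' x * \<phi> x) = 0" if "e' \<in> E" for e'
    proof -
      have "0 = (\<Sum>x\<in>X'. a' e' x * \<psi> x)" using \<psi>(1) that by auto
      also have "\<dots> = (\<Sum>x\<in>X'. a e' x * \<psi> x - a e' x0 / a e x0 * (a e x * \<psi> x))"
        by (rule sum.cong) (auto simp: a'_def field_simps)
      also have "\<dots> = (\<Sum>x\<in>X'. a e' x * \<psi> x) - a e' x0 / a e x0 * s"
        by (simp add: s_def sum_subtractf sum_distrib_left)
      finally have "(\<Sum>x\<in>X'. a e' x * \<psi> x) = a e' x0 / a e x0 * s" by simp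
      then show ?thesis using split[of "a e'"] by simp
    qed
    moreover have "\<exists>x\<in>X. \<phi> x \<noteq> 0" using \<psi>(2) X'_def \<phi>_def by auto
    ultimately show ?thesis by (intro exI[of _ \<phi>]) auto
  qed
qed

lemma good_ext:
  assumes "good S"
    and "\<forall>w\<in>S. \<phi>1 (fst w) + \<phi>2 (fst (snd w)) + \<phi>3 (snd (snd w)) = (0::complex)"
    and "\<phi>1 t1 + \<phi>2 t2 + \<phi>3 t3 \<noteq> 0"
  shows "good (insert (t1,t2,t3) S)"
  unfolding good_def
proof
  fix f :: "'a \<times> 'b \<times> 'c \<Rightarrow> complex"
  obtain u1 u2 u3 where u: "\<forall>w1 w2 w3. (w1, w2, w3) \<in> S \<longrightarrow> f (w1, w2, w3) = u1 w1 + u2 w2 + u3 w3"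
    using assms(1) unfolding good_def by (elim allE[of _ f]) blast
  define l where "l = (f (t1,t2,t3) - (u1 t1 + u2 t2 + u3 t3)) / (\<phi>1 t1 + \<phi>2 t2 + \<phi>3 t3)"
  have "\<forall>w1 w2 w3. (w1, w2, w3) \<in> insert (t1,t2,t3) S \<longrightarrow>
     f (w1, w2, w3) = (\<lambda>x. u1 x + l * \<phi>1 x) w1 + (\<lambda>x. u2 x + l * \<phi>2 x) w2 + (\<lambda>x. u3 x + l * \<phi>3 x) w3"
  proof (intro allI impI)
    fix w1 w2 w3 assume "(w1, w2, w3) \<in> insert (t1,t2,t3) S"
    then consider "(w1,w2,w3) = (t1,t2,t3)" | "(w1,w2,w3) \<in> S" by blast
    then show "f (w1, w2, w3) = (\<lambda>x. u1 x + l * \<phi>1 x) w1 + (\<lambda>x. u2 x + l * \<phi>2 x) w2 + (\<lambda>x. u3 x + l * \<phi>3 x) w3"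
    proof cases
      case 1
      have "l * (\<phi>1 t1 + \<phi>2 t2 + \<phi>3 t3) = f (t1,t2,t3) - (u1 t1 + u2 t2 + u3 t3)"
        using assms(3) unfolding l_def by simp
      then show ?thesis using 1 by (simp add: algebra_simps del: times_divide_eq_left times_divide_eq_right divide_const_simps)
    next
      case 2
      have "\<phi>1 w1 + \<phi>2 w2 + \<phi>3 w3 = 0" using bspec[OF assms(2) 2] by simp
      then have "l * \<phi>1 w1 + l * \<phi>2 w2 + l * \<phi>3 w3 = 0" by (simp add: distrib_left[symmetric])
      have "f (w1,w2,w3) = u1 w1 + u2 w2 + u3 w3" using u 2 by blast
      then show ?thesis using \<open>l * \<phi>1 w1 + l * \<phi>2 w2 + l * \<phi>3 w3 = 0\<close> by (simp add: algebra_simps)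
    qed
  qed
  then show "\<exists>u1 u2 u3. \<forall>w1 w2 w3. (w1, w2, w3) \<in> insert (t1,t2,t3) S \<longrightarrow> f (w1, w2, w3) = u1 w1 + u2 w2 + u3 w3"
    by (intro exI[of _ "\<lambda>x. u1 x + l * \<phi>1 x"] exI[of _ "\<lambda>x. u2 x + l * \<phi>2 x"] exI[of _ "\<lambda>x. u3 x + l * \<phi>3 x"])
qed


lemma full_bound:
  fixes S :: "('a \<times> 'b \<times> 'c) set"
  assumes "full S" "finite S"
  shows "card (proj1 S) + card (proj2 S) + card (proj3 S) \<le> card S + 2"
proof (rule ccontr)
  assume "\<not> ?thesis"
  hence big: "card S + 2 < card (proj1 S) + card (proj2 S) + card (proj3 S)" by simp
  have f1: "finite (proj1 S)" and f2: "finite (proj2 S)" and f3: "finite (proj3 S)"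
    using assms(2) unfolding proj1_def proj2_def proj3_def by auto
  have "S \<noteq> {}" using big unfolding proj1_def proj2_def proj3_def by auto
  then obtain v1 v2 v3 where w0: "(v1,v2,v3) \<in> S" by (metis ex_in_conv prod_cases3)
  have v1: "v1 \<in> proj1 S" and v2: "v2 \<in> proj2 S" and v3: "v3 \<in> proj3 S"
    using w0 unfolding proj1_def proj2_def proj3_def by force+
  define Vs :: "('a + 'b + 'c) set" where "Vs = Inl ` proj1 S \<union> Inr ` (Inl ` proj2 S \<union> Inr ` proj3 S)"
  have fVs: "finite Vs" using f1 f2 f3 Vs_def by auto
  have cVs: "card Vs = card (proj1 S) + card (proj2 S) + card (proj3 S)"
  proof -
    have "card (Inl ` proj2 S \<union> Inr ` proj3 S :: ('b + 'c) set) = card (proj2 S) + card (proj3 S)"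
      using f2 f3 by (subst card_Un_disjoint) (auto simp: card_image)
    moreover have "card Vs = card (proj1 S) + card (Inl ` proj2 S \<union> Inr ` proj3 S :: ('b + 'c) set)"
      unfolding Vs_def using f1 f2 f3 by (subst card_Un_disjoint) (auto simp: card_image)
    ultimately show ?thesis by simp
  qed
  define X where "X = Vs - {Inl v1, Inr (Inl v2)}"
  have fX: "finite X" using fVs X_def by auto
  have "card X = card Vs - 2"
  proof -
    have "{Inl v1, Inr (Inl v2)} \<subseteq> Vs" using v1 v2 Vs_def by auto
    then show ?thesis unfolding X_def using fVs by (subst card_Diff_subset) auto
  qed
  hence cX: "card S < card X" using big cVs by simp
  define inc :: "'a \<times> 'b \<times> 'c \<Rightarrow> 'a + 'b + 'c \<Rightarrow> complex" where
    "inc w x = (case x of Inl a \<Rightarrow> if fst w = a then 1 else 0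
       | Inr (Inl b) \<Rightarrow> if fst (snd w) = b then 1 else 0
       | Inr (Inr c) \<Rightarrow> if snd (snd w) = c then 1 else 0)" for w x
  obtain \<phi> where \<phi>: "\<forall>w\<in>S. (\<Sum>x\<in>X. inc w x * \<phi> x) = 0" "\<exists>x\<in>X. \<phi> x \<noteq> 0"
    using homog[OF assms(2) fX cX, of inc] by blast
  define \<phi>' where "\<phi>' x = (if x \<in> X then \<phi> x else 0)" for x
  define \<phi>1 where "\<phi>1 a = \<phi>' (Inl a)" for a
  define \<phi>2 where "\<phi>2 b = \<phi>' (Inr (Inl b))" for b
  define \<phi>3 where "\<phi>3 c = \<phi>' (Inr (Inr c))" for c
  have key: "\<phi>1 w1 + \<phi>2 w2 + \<phi>3 w3 = 0" if "(w1,w2,w3) \<in> S" for w1 w2 w3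
  proof -
    define w where "w = (w1,w2,w3)"
    define T :: "('a + 'b + 'c) set" where "T = {Inl w1, Inr (Inl w2), Inr (Inr w3)}"
    have "0 = (\<Sum>x\<in>X. inc w x * \<phi> x)" using \<phi>(1) that w_def by auto
    also have "\<dots> = (\<Sum>x\<in>X. inc w x * \<phi>' x)" by (rule sum.cong) (auto simp: \<phi>'_def)
    also have "\<dots> = (\<Sum>x\<in>X \<union> T. inc w x * \<phi>' x)"
      by (rule sum.mono_neutral_right[symmetric]) (auto simp: fX T_def \<phi>'_def)
    also have "\<dots> = (\<Sum>x\<in>T. inc w x * \<phi>' x)"
    proof (rule sum.mono_neutral_right)
      show "\<forall>i\<in>X \<union> T - T. inc w i * \<phi>' i = 0"
      proof
        fix i assume "i \<in> X \<union> T - T"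
        then show "inc w i * \<phi>' i = 0"
          by (auto simp: inc_def w_def T_def split: sum.splits)
      qed
    qed (auto simp: fX T_def)
    also have "\<dots> = \<phi>1 w1 + \<phi>2 w2 + \<phi>3 w3"
      by (simp add: T_def inc_def w_def \<phi>1_def \<phi>2_def \<phi>3_def)
    finally show ?thesis by simp
  qed
  have z1: "\<phi>1 v1 = 0" and z2: "\<phi>2 v2 = 0" by (auto simp: \<phi>1_def \<phi>2_def \<phi>'_def X_def)
  have z3: "\<phi>3 v3 = 0" using key[OF w0] z1 z2 by simp
  obtain x0 where x0: "x0 \<in> X" "\<phi> x0 \<noteq> 0" using \<phi>(2) by blast
  have "\<exists>t1 t2 t3. t1 \<in> proj1 S \<and> t2 \<in> proj2 S \<and> t3 \<in> proj3 S \<and> \<phi>1 t1 + \<phi>2 t2 + \<phi>3 t3 \<noteq> 0"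
  proof (cases x0)
    case (Inl a)
    then have "a \<in> proj1 S" "\<phi>1 a \<noteq> 0" using x0 by (auto simp: X_def Vs_def \<phi>1_def \<phi>'_def)
    then show ?thesis using v2 v3 z2 z3 by (intro exI[of _ a] exI[of _ v2] exI[of _ v3]) simp
  next
    case (Inr y)
    show ?thesis
    proof (cases y)
      case (Inl b)
      then have "b \<in> proj2 S" "\<phi>2 b \<noteq> 0" using x0 Inr by (auto simp: X_def Vs_def \<phi>2_def \<phi>'_def)
      then show ?thesis using v1 v3 z1 z3 by (intro exI[of _ v1] exI[of _ b] exI[of _ v3]) simp
    next
      case (Inr c)
      then have "c \<in> proj3 S" "\<phi>3 c \<noteq> 0" using x0 \<open>x0 = Inr y\<close> by (auto simp: X_def Vs_def \<phi>3_def \<phi>'_def)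
      then show ?thesis using v1 v2 z1 z2 by (intro exI[of _ v1] exI[of _ v2] exI[of _ c]) simp
    qed
  qed
  then obtain t1 t2 t3 where t: "t1 \<in> proj1 S" "t2 \<in> proj2 S" "t3 \<in> proj3 S"
    "\<phi>1 t1 + \<phi>2 t2 + \<phi>3 t3 \<noteq> 0" by blast
  have gS: "good S" using assms(1) unfolding full_def by simp
  have g: "good (insert (t1,t2,t3) S)"
  proof (rule good_ext[of S \<phi>1 \<phi>2 \<phi>3])
    show "\<forall>w\<in>S. \<phi>1 (fst w) + \<phi>2 (fst (snd w)) + \<phi>3 (snd (snd w)) = 0"
      using key by auto
  qed (use gS t(4) in auto)
  have nin: "(t1,t2,t3) \<notin> S" using key t(4) by blast
  have sub: "insert (t1,t2,t3) S \<subseteq> proj1 S \<times> proj2 S \<times> proj3 S"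
    using t unfolding proj1_def proj2_def proj3_def by force
  have "S \<subset> insert (t1,t2,t3) S" using nin by auto
  then show False using assms(1) g sub unfolding full_def by blast
qed

definition hq :: "nat \<Rightarrow> nat \<Rightarrow> nat \<Rightarrow> nat \<Rightarrow> nat \<Rightarrow> nat \<times> nat" where
"hq n K tq k t =
 (if k = 0 then
    (if t = 2 then (0,0) else if t = 3 then (if K = 0 \<and> tq = 2 then (0,0) else (0,4))
     else (if K = 0 then (0,4) else if K = n then (n,1) else (0,2)))
  else if k = n then
   (if K = n then
      (if t = 0 then (if tq = 3 then (k,2) else (k,0))
       else if t = 1 then (k,3)
       else if t = 2 then (if tq = 0 \<or> tq = 3 then (k,0) else (k,3))
       else (k,2))
    else (if t = 0 then (k,0) else if t = 1 then (k,1) else if t = 2 then (k,3) else (k,2)))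
  else if 1 \<le> K \<and> K < n \<and> k < K then
   (if t = 0 then (k,0) else if t = 1 then (k,1) else if t = 2 then (k,3) else if t = 3 then (k,2) else (k,4))
  else if k = K then
   (if t = 4 then (k,4) else if t = 3 then (k,1)
    else if t = 1 then (if tq = 3 then (k,1) else (k,3))
    else if t = 2 then (if tq = 0 \<or> tq = 4 then (k,0) else (k,3))
    else (if tq = 4 then (k,4) else (k,0)))
  else
   (if t = 4 then (k-1,2) else if t = 0 then (k,4) else if t = 1 then (k,3) else if t = 2 then (k,0) else (k,1)))"

definition gq :: "nat \<Rightarrow> nat \<Rightarrow> nat \<Rightarrow> nat \<times> nat \<Rightarrow> nat \<times> nat" where
"gq n K tq v = (let a = fst v; s = snd v in
  if a = 0 then
    (if s = 0 then (if K = 0 \<and> tq = 2 then (0,3) else (0,2))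
     else if s = 4 then (if K = 0 \<and> tq \<noteq> 0 then (0,0) else (0,3))
     else (if 1 \<le> K \<and> K < n then (0,0) else (1,4)))
  else if s = 1 then
    (if a = n then (if K = n then (0,0) else (a,1))
     else if 1 \<le> K \<and> K < n \<and> a < K then (a,1)
     else if a = K then (if tq = 3 then (a,1) else (a,3))
     else (a,3))
  else if s = 0 then
    (if a = n then (if K = n \<and> (tq = 0 \<or> tq = 3) then (a,2) else (a,0))
     else if 1 \<le> K \<and> K < n \<and> a < K then (a,0)
     else if a = K then (if tq = 0 \<or> tq = 4 then (a,2) else (a,0))
     else (a,2))
  else if s = 3 then
    (if a = n then (if K = n then (if tq = 1 then (a,2) else (a,1)) else (a,2))
     else if 1 \<le> K \<and> K < n \<and> a < K then (a,2)
     else if a = K then (if tq = 1 \<or> tq = 3 then (a,2) else (a,1))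
     else (a,1))
  else if s = 2 then
    (if a = n then (if K = n \<and> tq = 3 then (a,0) else (a,3))
     else if 1 \<le> K \<and> K < n \<and> a < K then (a,3)
     else (a+1,4))
  else
    (if 1 \<le> K \<and> K < n \<and> a < K then (a,4)
     else if a = K then (if tq = 4 then (a,0) else (a,4))
     else (a,0)))"


definition PI :: "nat \<Rightarrow> (nat \<times> nat) set" where
"PI n = {(0,t) | t. t < 4} \<union> {(k,t). 1 \<le> k \<and> k \<le> n \<and> t < 5}"

definition Dom :: "nat \<Rightarrow> (nat \<times> nat) set" where
"Dom n = PI n - {(0,1),(n,4)}"

definition cx :: "nat \<Rightarrow> nat \<times> nat \<Rightarrow> (nat \<times> nat) \<times> (nat \<times> nat) \<times> (nat \<times> nat)" where
"cx n p = (let k = fst p; t = snd p in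
 if k = 0 then (if t = 0 then ((n,1),(0,2),(0,4)) else if t = 1 then ((0,5),(0,6),(0,7))
   else if t = 2 then ((0,0),(0,2),(0,7)) else ((0,0),(0,6),(0,4)))
 else if t = 0 then ((k,0),(k,2),(k,4)) else if t = 1 then ((k,1),(k,3),(k,4))
 else if t = 2 then ((k,0),(k,3),(k-1,4)) else if t = 3 then ((k,1),(k,2),(0,7))
 else ((0,5),(k-1,2),(k,4)))"

definition c1 :: "nat \<Rightarrow> nat \<times> nat \<Rightarrow> nat \<times> nat" where "c1 n p = fst (cx n p)"
definition c2 :: "nat \<Rightarrow> nat \<times> nat \<Rightarrow> nat \<times> nat" where "c2 n p = fst (snd (cx n p))"
definition c3 :: "nat \<Rightarrow> nat \<times> nat \<Rightarrow> nat \<times> nat" where "c3 n p = snd (snd (cx n p))"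

lemma Dom_cases:
  assumes "(k,t) \<in> Dom n"
  shows "k = 0 \<and> (t = 0 \<or> t = 2 \<or> t = 3) \<or> k = n \<and> 1 \<le> n \<and> (t = 0 \<or> t = 1 \<or> t = 2 \<or> t = 3)
     \<or> 1 \<le> k \<and> k < n \<and> (t = 0 \<or> t = 1 \<or> t = 2 \<or> t = 3 \<or> t = 4)"
  using assms unfolding Dom_def PI_def by auto

lemma Dom_q:
  assumes "(K,tq) \<in> Dom n"
  shows "K \<le> n" "tq < 5" "K = 0 \<longrightarrow> tq = 0 \<or> tq = 2 \<or> tq = 3" "K = n \<longrightarrow> tq \<noteq> 4"
  using assms unfolding Dom_def PI_def by auto

lemma H1:
  assumes "n \<ge> 1" "(K,tq) \<in> Dom n" "(k,t) \<in> Dom n" "(k,t) \<noteq> (K,tq)"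
  shows "gq n K tq (hq n K tq k t) = (k,t)"
proof -
  note q = Dom_q[OF assms(2)]
  from Dom_cases[OF assms(3)] show ?thesis
    using assms(1,4) q
    by (elim disjE conjE; simp only:; simp add: hq_def gq_def Let_def split: if_split; (auto)?)
qed

lemma H2:
  assumes "n \<ge> 1" "(K,tq) \<in> Dom n" "(k,t) \<in> Dom n" "(k,t) \<noteq> (K,tq)"
  shows "hq n K tq k t \<in> {c1 n (k,t), c2 n (k,t), c3 n (k,t)}"
proof -
  note q = Dom_q[OF assms(2)]
  from Dom_cases[OF assms(3)] show ?thesis
    using assms(1,4) q
    by (elim disjE conjE; simp only:; simp add: hq_def c1_def c2_def c3_def cx_def Let_def split: if_split; (auto)?)
qed

lemma H3:
  assumes "n \<ge> 1" "(K,tq) \<in> Dom n" "(k,t) \<in> Dom n" "(k,t) \<noteq> (K,tq)"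
  shows "hq n K tq k t \<notin> {(0,5),(0,6),(0,7),(n-1,2),(n,4)}"
proof -
  note q = Dom_q[OF assms(2)]
  from Dom_cases[OF assms(3)] show ?thesis
    using assms(1,4) q
    by (elim disjE conjE; simp only:; simp add: hq_def Let_def split: if_split; (auto)?)
qed

definition r1 :: "'a \<Rightarrow> 'a \<Rightarrow> (int \<Rightarrow> 'a) \<Rightarrow> nat \<times> nat \<Rightarrow> 'a" where
"r1 x1 y1 \<alpha>1 v = (if fst v = 0 then (if snd v = 5 then x1 else y1)
   else if snd v = 0 then \<alpha>1 (5 * int (fst v) - 4) else \<alpha>1 (5 * int (fst v) - 1))"
definition r2 :: "'b \<Rightarrow> 'b \<Rightarrow> (int \<Rightarrow> 'b) \<Rightarrow> nat \<times> nat \<Rightarrow> 'b" where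
"r2 x2 y2 \<alpha>2 v = (if fst v = 0 then (if snd v = 6 then x2 else y2)
   else if snd v = 2 then \<alpha>2 (5 * int (fst v) - 3) else \<alpha>2 (5 * int (fst v)))"
definition r3 :: "'c \<Rightarrow> 'c \<Rightarrow> (int \<Rightarrow> 'c) \<Rightarrow> nat \<times> nat \<Rightarrow> 'c" where
"r3 x3 z3 \<alpha>3 v = (if fst v = 0 then (if snd v = 7 then x3 else z3)
   else \<alpha>3 (5 * int (fst v) - 2))"

definition K1 :: "(nat \<times> nat) set" where "K1 = {(0,0),(0,5)} \<union> {v. fst v \<ge> 1 \<and> snd v \<le> 1}"
definition K2 :: "(nat \<times> nat) set" where "K2 = {(0,2),(0,6)} \<union> {v. fst v \<ge> 1 \<and> (snd v = 2 \<or> snd v = 3)}"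
definition K3 :: "(nat \<times> nat) set" where "K3 = {(0,4),(0,7)} \<union> {v. fst v \<ge> 1 \<and> snd v = 4}"

lemma ranges:
  assumes "p \<in> PI n" "n \<ge> 1"
  shows "c1 n p \<in> K1" "c2 n p \<in> K2" "c3 n p \<in> K3"
  using assms unfolding PI_def K1_def K2_def K3_def c1_def c2_def c3_def cx_def Let_def
  by auto

lemma inj_r1:
  assumes "x1 \<noteq> y1" "inj_on \<alpha>1 I1" "x1 \<notin> \<alpha>1 ` I1" "y1 \<notin> \<alpha>1 ` I1"
  shows "inj_on (r1 x1 y1 \<alpha>1) K1"
proof (rule inj_onI)
  fix u v assume u: "u \<in> K1" and v: "v \<in> K1" and e: "r1 x1 y1 \<alpha>1 u = r1 x1 y1 \<alpha>1 v"
  have m: "5 * int a - 4 \<in> I1" "5 * int a - 1 \<in> I1" if "a \<ge> 1" for a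
    using that unfolding I1_def by (auto intro!: exI[of _ "int a"])
  show "u = v"
  proof (cases u; cases v)
    fix a s b t assume [simp]: "u = (a,s)" "v = (b,t)"
    have ne: "5 * int a - 4 \<noteq> 5 * int b - 1" "5 * int b - 4 \<noteq> 5 * int a - 1" by presburger+
    show ?thesis using u v e assms m ne unfolding K1_def r1_def
      by (auto split: if_splits dest: inj_onD[OF assms(2)])
  qed
qed

lemma inj_r2:
  assumes "x2 \<noteq> y2" "inj_on \<alpha>2 I2" "x2 \<notin> \<alpha>2 ` I2" "y2 \<notin> \<alpha>2 ` I2"
  shows "inj_on (r2 x2 y2 \<alpha>2) K2"
proof (rule inj_onI)
  fix u v assume u: "u \<in> K2" and v: "v \<in> K2" and e: "r2 x2 y2 \<alpha>2 u = r2 x2 y2 \<alpha>2 v"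
  have m: "5 * int a - 3 \<in> I2" "5 * int a \<in> I2" if "a \<ge> 1" for a
    using that unfolding I2_def by (auto intro!: exI[of _ "int a"])
  show "u = v"
  proof (cases u; cases v)
    fix a s b t assume [simp]: "u = (a,s)" "v = (b,t)"
    have ne: "5 * int a - 3 \<noteq> 5 * int b" "5 * int b - 3 \<noteq> 5 * int a" by presburger+
    show ?thesis using u v e assms m ne unfolding K2_def r2_def
      by (auto split: if_splits dest: inj_onD[OF assms(2)])
  qed
qed

lemma inj_r3:
  assumes "x3 \<noteq> z3" "inj_on \<alpha>3 I3" "x3 \<notin> \<alpha>3 ` I3" "z3 \<notin> \<alpha>3 ` I3"
  shows "inj_on (r3 x3 z3 \<alpha>3) K3"
proof (rule inj_onI)
  fix u v assume u: "u \<in> K3" and v: "v \<in> K3" and e: "r3 x3 z3 \<alpha>3 u = r3 x3 z3 \<alpha>3 v"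
  have m: "5 * int a - 2 \<in> I3" if "a \<ge> 1" for a
    using that unfolding I3_def by (auto intro!: exI[of _ "int a"])
  show "u = v"
  proof (cases u; cases v)
    fix a s b t assume [simp]: "u = (a,s)" "v = (b,t)"
    show ?thesis using u v e assms m unfolding K3_def r3_def
      by (auto split: if_splits dest: inj_onD[OF assms(2)])
  qed
qed

definition ptp where
"ptp x1 y1 x2 y2 x3 z3 \<alpha>1 \<alpha>2 \<alpha>3 n p =
   (r1 x1 y1 \<alpha>1 (c1 n p), r2 x2 y2 \<alpha>2 (c2 n p), r3 x3 z3 \<alpha>3 (c3 n p))"

lemma ci_inv:
  assumes "p \<in> PI n"
  shows "(if c1 n p = (0,5) then (if c2 n p = (0,6) then (0,1) else (fst (c2 n p) + 1, 4))
          else if c1 n p = (0,0) then (if c2 n p = (0,2) then (0,2) else (0,3))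
          else if snd (c1 n p) = 0 then (fst (c1 n p), if snd (c2 n p) = 2 then 0 else 2)
          else if fst (c2 n p) = 0 then (0,0) else (fst (c1 n p), if snd (c2 n p) = 3 then 1 else 3)) = p"
  using assms unfolding PI_def c1_def c2_def cx_def Let_def by auto

lemma inj_ptp:
  assumes d1: "x1 \<noteq> y1" "inj_on \<alpha>1 I1" "x1 \<notin> \<alpha>1 ` I1" "y1 \<notin> \<alpha>1 ` I1"
    and d2: "x2 \<noteq> y2" "inj_on \<alpha>2 I2" "x2 \<notin> \<alpha>2 ` I2" "y2 \<notin> \<alpha>2 ` I2"
    and n: "n \<ge> 1"
  shows "inj_on (ptp x1 y1 x2 y2 x3 z3 \<alpha>1 \<alpha>2 \<alpha>3 n) (PI n)"
proof (rule inj_onI)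
  fix p p' assume p: "p \<in> PI n" and p': "p' \<in> PI n"
    and e: "ptp x1 y1 x2 y2 x3 z3 \<alpha>1 \<alpha>2 \<alpha>3 n p = ptp x1 y1 x2 y2 x3 z3 \<alpha>1 \<alpha>2 \<alpha>3 n p'"
  have "c1 n p = c1 n p'"
    using inj_onD[OF inj_r1[OF d1]] e ranges[OF p n] ranges[OF p' n] unfolding ptp_def by auto
  moreover have "c2 n p = c2 n p'"
    using inj_onD[OF inj_r2[OF d2]] e ranges[OF p n] ranges[OF p' n] unfolding ptp_def by auto
  ultimately show "p = p'" using ci_inv[OF p] ci_inv[OF p'] by metis
qed

lemma apt_r4:
  assumes "m \<noteq> 1" "m \<noteq> 2" "m \<noteq> 3" "m mod 5 = 4" "(int m + 1) div 5 = N"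
  shows "apt x1 y1 x2 y2 x3 z3 \<alpha>1 \<alpha>2 \<alpha>3 m = (\<alpha>1 (5*N - 4), A2 y2 \<alpha>2 (5*N - 3), A3 z3 \<alpha>3 (5*N - 2))"
  unfolding apt_def Let_def using assms by simp
lemma apt_r0:
  assumes "m \<noteq> 1" "m \<noteq> 2" "m \<noteq> 3" "m mod 5 = 0" "int m div 5 = N"
  shows "apt x1 y1 x2 y2 x3 z3 \<alpha>1 \<alpha>2 \<alpha>3 m = (\<alpha>1 (5*N - 1), A2 y2 \<alpha>2 (5*N), A3 z3 \<alpha>3 (5*N - 2))"
  unfolding apt_def Let_def using assms by simp
lemma apt_r1:
  assumes "m \<noteq> 1" "m \<noteq> 2" "m \<noteq> 3" "m mod 5 = 1" "(int m - 1) div 5 = N"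
  shows "apt x1 y1 x2 y2 x3 z3 \<alpha>1 \<alpha>2 \<alpha>3 m = (\<alpha>1 (5*N - 4), A2 y2 \<alpha>2 (5*N), A3 z3 \<alpha>3 (5*N - 7))"
  unfolding apt_def Let_def using assms by simp
lemma apt_r2:
  assumes "m \<noteq> 1" "m \<noteq> 2" "m \<noteq> 3" "m mod 5 = 2" "(int m - 2) div 5 = N"
  shows "apt x1 y1 x2 y2 x3 z3 \<alpha>1 \<alpha>2 \<alpha>3 m = (\<alpha>1 (5*N - 1), A2 y2 \<alpha>2 (5*N - 3), x3)"
  unfolding apt_def Let_def using assms by simp
lemma apt_r3:
  assumes "m \<noteq> 1" "m \<noteq> 2" "m \<noteq> 3" "m mod 5 = 3" "(int m - 3) div 5 = N"
  shows "apt x1 y1 x2 y2 x3 z3 \<alpha>1 \<alpha>2 \<alpha>3 m = (x1, A2 y2 \<alpha>2 (5*N - 8), A3 z3 \<alpha>3 (5*N - 2))"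
  unfolding apt_def Let_def using assms by simp

lemma apt_blk:
  assumes "k \<ge> 1" "t < 5"
  shows "apt x1 y1 x2 y2 x3 z3 \<alpha>1 \<alpha>2 \<alpha>3 (5*k - 1 + t) = ptp x1 y1 x2 y2 x3 z3 \<alpha>1 \<alpha>2 \<alpha>3 n (k,t)"
proof -
  define m where "m = 5*k - 1 + t"
  have a: "m \<noteq> 1" "m \<noteq> 2" "m \<noteq> 3" using assms m_def by auto
  have km: "int (k - 1) = int k - 1" using assms by simp
  have k1: "(k \<le> 1) = (k = 1)" "(k \<le> Suc 0) = (k = Suc 0)" using assms by auto
  have ne: "5 * int k - 3 \<noteq> -3" "5 * int k \<noteq> -3" "5 * int k - 2 \<noteq> -2" using assms by auto
  have t: "t = 0 \<or> t = 1 \<or> t = 2 \<or> t = 3 \<or> t = 4" using assms by auto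
  have e: "apt x1 y1 x2 y2 x3 z3 \<alpha>1 \<alpha>2 \<alpha>3 m = ptp x1 y1 x2 y2 x3 z3 \<alpha>1 \<alpha>2 \<alpha>3 n (k,t)"
  proof (rule disjE[OF t]; (elim disjE)?)
    assume t0: "t = 0"
    have mm: "m = 5*(k-1) + 4" using assms m_def t0 by simp
    have im: "int m = 5 * int k - 1" using assms m_def t0 by simp
    have f1: "m mod 5 = 4" by (simp add: mm)
    have f2: "(int m + 1) div 5 = int k" by (simp add: im)
    show ?thesis using assms ne t0
      by (subst apt_r4[OF a f1 f2]) (simp add: ptp_def r1_def r2_def r3_def c1_def c2_def c3_def cx_def A2_def A3_def)
  next
    assume t0: "t = 1"
    have mm: "m = 5*k" using assms m_def t0 by simp
    have im: "int m = 5 * int k" using assms m_def t0 by simp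
    have f1: "m mod 5 = 0" by (simp add: mm)
    have f2: "int m div 5 = int k" by (simp add: im)
    show ?thesis using assms ne t0
      by (subst apt_r0[OF a f1 f2]) (simp add: ptp_def r1_def r2_def r3_def c1_def c2_def c3_def cx_def A2_def A3_def)
  next
    assume t0: "t = 2"
    have mm: "m = 5*k + 1" using assms m_def t0 by simp
    have im: "int m = 5 * int k + 1" using assms m_def t0 by simp
    have f1: "m mod 5 = 1" by (simp add: mm)
    have f2: "(int m - 1) div 5 = int k" by (simp add: im)
    show ?thesis using assms ne t0 km k1
      by (subst apt_r1[OF a f1 f2]) (simp add: ptp_def r1_def r2_def r3_def c1_def c2_def c3_def cx_def A2_def A3_def algebra_simps)
  next
    assume t0: "t = 3"
    have mm: "m = 5*k + 2" using assms m_def t0 by simp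
    have im: "int m = 5 * int k + 2" using assms m_def t0 by simp
    have f1: "m mod 5 = 2" by (simp add: mm mod_Suc)
    have f2: "(int m - 2) div 5 = int k" by (simp add: im)
    show ?thesis using assms ne t0
      by (subst apt_r2[OF a f1 f2]) (simp add: ptp_def r1_def r2_def r3_def c1_def c2_def c3_def cx_def A2_def A3_def)
  next
    assume t0: "t = 4"
    have mm: "m = 5*k + 3" using assms m_def t0 by simp
    have im: "int m = 5 * int k + 3" using assms m_def t0 by simp
    have f1: "m mod 5 = 3" by (simp add: mm)
    have f2: "(int m - 3) div 5 = int k" by (simp add: im)
    show ?thesis using assms ne t0 km k1
      by (subst apt_r3[OF a f1 f2]) (simp add: ptp_def r1_def r2_def r3_def c1_def c2_def c3_def cx_def A2_def A3_def algebra_simps)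
  qed
  then show ?thesis using m_def by simp
qed

lemma finite_PI: "finite (PI n)"
proof -
  have "PI n \<subseteq> {0..n} \<times> {0..<5}" unfolding PI_def by auto
  then show ?thesis by (rule finite_subset) auto
qed

lemma card_PI: "card (PI n) = 5*n + 4"
proof -
  have e: "PI n = ({0} \<times> {0..<4}) \<union> ({1..n} \<times> {0..<5})" unfolding PI_def by auto
  have "card (({0::nat} \<times> {0..<4::nat}) \<union> ({1..n} \<times> {0..<5})) = card ({0::nat} \<times> {0..<4::nat}) + card ({1..n} \<times> {0..<5::nat})"
    by (rule card_Un_disjoint) auto
  then show ?thesis unfolding e by (simp add: card_cartesian_product)
qed

lemma disj_sub: "A \<subseteq> X \<Longrightarrow> B \<subseteq> Y \<Longrightarrow> X \<inter> Y = {} \<Longrightarrow> A \<inter> B = {}" by blast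

lemma comb:
  assumes n: "n \<ge> 1" and J: "J \<subseteq> PI n" "(0,1) \<in> J" "(n,4) \<in> J" and q: "q \<in> Dom n" "q \<notin> J"
  shows "card J + 3 \<le> card (c1 n ` J) + card (c2 n ` J) + card (c3 n ` J)"
proof -
  obtain K tq where qe: "q = (K,tq)" by (cases q)
  have fJ: "finite J" using J(1) finite_PI finite_subset by blast
  have s1: "c1 n ` J \<subseteq> K1" using ranges(1)[OF _ n] J(1) by (intro image_subsetI) blast
  have s2: "c2 n ` J \<subseteq> K2" using ranges(2)[OF _ n] J(1) by (intro image_subsetI) blast
  have s3: "c3 n ` J \<subseteq> K3" using ranges(3)[OF _ n] J(1) by (intro image_subsetI) blast
  have dK: "K1 \<inter> K2 = {}" "(K1 \<union> K2) \<inter> K3 = {}" unfolding K1_def K2_def K3_def by auto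
  define NS where "NS = c1 n ` J \<union> c2 n ` J \<union> c3 n ` J"
  have fNS: "finite NS" using fJ NS_def by auto
  have cNS: "card NS = card (c1 n ` J) + card (c2 n ` J) + card (c3 n ` J)"
  proof -
    have i1: "c1 n ` J \<inter> c2 n ` J = {}" by (rule disj_sub[OF s1 s2 dK(1)])
    have i2: "(c1 n ` J \<union> c2 n ` J) \<inter> c3 n ` J = {}" by (rule disj_sub[OF Un_mono[OF s1 s2] s3 dK(2)])
    have "card (c1 n ` J \<union> c2 n ` J) = card (c1 n ` J) + card (c2 n ` J)"
      using fJ i1 by (intro card_Un_disjoint) auto
    moreover have "card NS = card (c1 n ` J \<union> c2 n ` J) + card (c3 n ` J)"
      unfolding NS_def using fJ i2 by (intro card_Un_disjoint) auto
    ultimately show ?thesis by simp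
  qed
  define D where "D = J - {(0,1),(n,4)}"
  have D_dom: "p \<in> Dom n" "p \<noteq> (K,tq)" if "p \<in> D" for p
    using that J q qe unfolding D_def Dom_def by auto
  have qD: "(K,tq) \<in> Dom n" using q qe by simp
  define h where "h p = hq n K tq (fst p) (snd p)" for p
  have inj: "inj_on h D"
  proof (rule inj_onI)
    fix p p' assume p: "p \<in> D" and p': "p' \<in> D" and e: "h p = h p'"
    have g1: "gq n K tq (h p) = p" using H1[OF n qD, of "fst p" "snd p"] D_dom[OF p] unfolding h_def by simp
    have g2: "gq n K tq (h p') = p'" using H1[OF n qD, of "fst p'" "snd p'"] D_dom[OF p'] unfolding h_def by simp
    show "p = p'" using g1 g2 e by metis
  qed
  have hNS: "h ` D \<subseteq> NS"
  proof
    fix v assume "v \<in> h ` D"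
    then obtain p where p: "p \<in> D" "v = h p" by blast
    have "p \<in> J" using p D_def by auto
    then show "v \<in> NS" using H2[OF n qD, of "fst p" "snd p"] D_dom[OF p(1)] p unfolding h_def NS_def by auto
  qed
  define Prot :: "(nat \<times> nat) set" where "Prot = {(0,5),(0,6),(0,7),(n-1,2),(n,4)}"
  have PNS: "Prot \<subseteq> NS"
  proof -
    have "c1 n (0,1) = (0,5)" "c2 n (0,1) = (0,6)" "c3 n (0,1) = (0,7)" "c2 n (n,4) = (n-1,2)" "c3 n (n,4) = (n,4)"
      using n by (auto simp: c1_def c2_def c3_def cx_def)
    then have "(0,5) \<in> NS" "(0,6) \<in> NS" "(0,7) \<in> NS" "(n-1,2) \<in> NS" "(n,4) \<in> NS"
      unfolding NS_def using J(2,3) by (metis UnI1 UnI2 rev_image_eqI)+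
    then show ?thesis unfolding Prot_def by blast
  qed
  have disj: "h ` D \<inter> Prot = {}"
  proof (rule ccontr)
    assume "h ` D \<inter> Prot \<noteq> {}"
    then obtain p where p: "p \<in> D" "h p \<in> Prot" by blast
    have "h p \<notin> Prot" using H3[OF n qD, of "fst p" "snd p"] D_dom[OF p(1)] unfolding h_def Prot_def by simp
    then show False using p(2) by simp
  qed
  have cP: "card Prot = 5" unfolding Prot_def by simp
  have fD: "finite D" using fJ D_def by auto
  have "card (h ` D \<union> Prot) = card D + 5"
    using card_Un_disjoint[of "h ` D" Prot] disj fD cP card_image[OF inj] unfolding Prot_def by simp
  moreover have "card (h ` D \<union> Prot) \<le> card NS" using hNS PNS fNS by (intro card_mono) auto
  moreover have "card D + 2 = card J"
  proof -
    have "{(0,1),(n,4)} \<subseteq> J" using J by auto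
    moreover have "card {(0::nat,1::nat),(n,4)} = 2" by simp
    ultimately show ?thesis unfolding D_def using fJ card_Diff_subset[of "{(0,1),(n,4)}" J] card_mono[of J "{(0,1),(n,4)}"]
      by simp
  qed
  ultimately show ?thesis using cNS by simp
qed

lemma Fset_eq:
  assumes n: "n \<ge> 1"
  shows "Fset x1 y1 x2 y2 x3 z3 \<alpha>1 \<alpha>2 \<alpha>3 n = ptp x1 y1 x2 y2 x3 z3 \<alpha>1 \<alpha>2 \<alpha>3 n ` PI n"
proof -
  let ?P = "ptp x1 y1 x2 y2 x3 z3 \<alpha>1 \<alpha>2 \<alpha>3 n"
  let ?a = "apt x1 y1 x2 y2 x3 z3 \<alpha>1 \<alpha>2 \<alpha>3"
  have b: "bpt y2 z3 \<alpha>1 n = ?P (0,0)" using n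
    by (simp add: bpt_def ptp_def r1_def r2_def r3_def c1_def c2_def c3_def cx_def)
  have a1: "?a 1 = ?P (0,1)"
    by (simp add: apt_def ptp_def r1_def r2_def r3_def c1_def c2_def c3_def cx_def)
  have a2: "?a 2 = ?P (0,2)"
    by (simp add: apt_def ptp_def r1_def r2_def r3_def c1_def c2_def c3_def cx_def)
  have a3: "?a 3 = ?P (0,3)"
    by (simp add: apt_def ptp_def r1_def r2_def r3_def c1_def c2_def c3_def cx_def)
  have F: "Fset x1 y1 x2 y2 x3 z3 \<alpha>1 \<alpha>2 \<alpha>3 n = insert (bpt y2 z3 \<alpha>1 n) (?a ` {1..5*n+3})"
    unfolding Fset_def Dset_def by simp
  show ?thesis
  proof
    show "Fset x1 y1 x2 y2 x3 z3 \<alpha>1 \<alpha>2 \<alpha>3 n \<subseteq> ?P ` PI n"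
    proof
      fix x assume "x \<in> Fset x1 y1 x2 y2 x3 z3 \<alpha>1 \<alpha>2 \<alpha>3 n"
      then consider "x = bpt y2 z3 \<alpha>1 n" | m where "m \<in> {1..5*n+3}" "x = ?a m"
        unfolding F by blast
      then show "x \<in> ?P ` PI n"
      proof cases
        case 1
        have "(0,0) \<in> PI n" unfolding PI_def by simp
        then show ?thesis using b 1 by (metis image_eqI)
      next
        case 2
        show ?thesis
        proof (cases "m \<le> 3")
          case True
          then have "m = 1 \<or> m = 2 \<or> m = 3" using 2 by auto
          moreover have "(0,1) \<in> PI n" "(0,2) \<in> PI n" "(0,3) \<in> PI n" unfolding PI_def by simp_all
          ultimately show ?thesis using 2 a1 a2 a3 by (metis image_eqI)
        next
          case False
          define k where "k = (m+1) div 5"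
          define t where "t = (m+1) mod 5"
          have e: "m + 1 = 5*k + t" unfolding k_def t_def by simp
          have m: "4 \<le> m" "m \<le> 5*n+3" using 2 False by auto
          have t5: "t < 5" unfolding t_def by simp
          have k1: "k \<ge> 1" using e m t5 by linarith
          have kn: "k \<le> n" using e m t5 by presburger
          have me: "m = 5*k - 1 + t" using e k1 by simp
          have "(k,t) \<in> PI n" using k1 kn t5 unfolding PI_def by simp
          moreover have "x = ?P (k,t)" using apt_blk[OF k1 t5] 2 me by simp
          ultimately show ?thesis by blast
        qed
      qed
    qed
  next
    show "?P ` PI n \<subseteq> Fset x1 y1 x2 y2 x3 z3 \<alpha>1 \<alpha>2 \<alpha>3 n"
    proof
      fix x assume "x \<in> ?P ` PI n"
      then obtain k t where kt: "(k,t) \<in> PI n" "x = ?P (k,t)" by auto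
      show "x \<in> Fset x1 y1 x2 y2 x3 z3 \<alpha>1 \<alpha>2 \<alpha>3 n"
      proof (cases "k = 0")
        case True
        then have "t = 0 \<or> t = 1 \<or> t = 2 \<or> t = 3" using kt unfolding PI_def by auto
        moreover have "(1::nat) \<in> {1..5*n+3}" "(2::nat) \<in> {1..5*n+3}" "(3::nat) \<in> {1..5*n+3}" by auto
        ultimately show ?thesis unfolding F using kt True b a1 a2 a3 by (metis image_eqI insertI1 insertI2)
      next
        case False
        then have k1: "1 \<le> k" and kn: "k \<le> n" and t5: "t < 5" using kt unfolding PI_def by auto
        then have "5*k - 1 + t \<in> {1..5*n+3}" by auto
        moreover have "x = ?a (5*k - 1 + t)" using apt_blk[OF k1 t5, of x1 y1 x2 y2 x3 z3 \<alpha>1 \<alpha>2 \<alpha>3 n] kt by simp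
        ultimately show ?thesis unfolding F by blast
      qed
    qed
  qed
qed

theorem mainTheorem7:
  fixes x1 y1 :: 'a and x2 y2 :: 'b and x3 z3 :: 'c
    and \<alpha>1 :: "int \<Rightarrow> 'a" and \<alpha>2 :: "int \<Rightarrow> 'b" and \<alpha>3 :: "int \<Rightarrow> 'c"
    and n :: nat
  assumes d1: "x1 \<noteq> y1" "inj_on \<alpha>1 I1" "x1 \<notin> \<alpha>1 ` I1" "y1 \<notin> \<alpha>1 ` I1"
    and d2: "x2 \<noteq> y2" "inj_on \<alpha>2 I2" "x2 \<notin> \<alpha>2 ` I2" "y2 \<notin> \<alpha>2 ` I2"
    and d3: "x3 \<noteq> z3" "inj_on \<alpha>3 I3" "x3 \<notin> \<alpha>3 ` I3" "z3 \<notin> \<alpha>3 ` I3"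
    and n: "n \<ge> 1"
  shows "(\<forall>S. S \<subset> Fset x1 y1 x2 y2 x3 z3 \<alpha>1 \<alpha>2 \<alpha>3 n
               \<and> apt x1 y1 x2 y2 x3 z3 \<alpha>1 \<alpha>2 \<alpha>3 1 \<in> S
               \<and> apt x1 y1 x2 y2 x3 z3 \<alpha>1 \<alpha>2 \<alpha>3 (5*n + 3) \<in> S
             \<longrightarrow> \<not> full S)
         \<and> card (Fset x1 y1 x2 y2 x3 z3 \<alpha>1 \<alpha>2 \<alpha>3 n) = 5*n + 4"
proof -
  define P where "P = ptp x1 y1 x2 y2 x3 z3 \<alpha>1 \<alpha>2 \<alpha>3 n"
  have FE: "Fset x1 y1 x2 y2 x3 z3 \<alpha>1 \<alpha>2 \<alpha>3 n = P ` PI n" unfolding P_def by (rule Fset_eq[OF n])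
  have inj: "inj_on P (PI n)" unfolding P_def by (rule inj_ptp[OF d1 d2 n])
  have a1: "apt x1 y1 x2 y2 x3 z3 \<alpha>1 \<alpha>2 \<alpha>3 1 = P (0,1)"
    by (simp add: P_def apt_def ptp_def r1_def r2_def r3_def c1_def c2_def c3_def cx_def)
  have al: "apt x1 y1 x2 y2 x3 z3 \<alpha>1 \<alpha>2 \<alpha>3 (5*n+3) = P (n,4)"
  proof -
    have eq: "5*n - 1 + 4 = 5*n + 3" using n by simp
    have e: "apt x1 y1 x2 y2 x3 z3 \<alpha>1 \<alpha>2 \<alpha>3 (5*n - 1 + 4) = P (n,4)"
      using apt_blk[OF n, of 4 x1 y1 x2 y2 x3 z3 \<alpha>1 \<alpha>2 \<alpha>3 n] unfolding P_def by simp
    show ?thesis using e eq by metis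
  qed
  have card: "card (Fset x1 y1 x2 y2 x3 z3 \<alpha>1 \<alpha>2 \<alpha>3 n) = 5*n + 4"
    unfolding FE card_image[OF inj] by (rule card_PI)
  have main: "\<not> full S" if S: "S \<subset> Fset x1 y1 x2 y2 x3 z3 \<alpha>1 \<alpha>2 \<alpha>3 n"
      "apt x1 y1 x2 y2 x3 z3 \<alpha>1 \<alpha>2 \<alpha>3 1 \<in> S"
      "apt x1 y1 x2 y2 x3 z3 \<alpha>1 \<alpha>2 \<alpha>3 (5*n + 3) \<in> S" for S
  proof
    assume fS: "full S"
    define J where "J = {p \<in> PI n. P p \<in> S}"
    have SJ: "S = P ` J" using S(1) FE unfolding J_def by auto
    have JP: "J \<subseteq> PI n" unfolding J_def by auto
    have fJ: "finite J" using JP finite_PI finite_subset by blast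
    have injJ: "inj_on P J" using inj JP inj_on_subset by blast
    have cS: "card S = card J" unfolding SJ by (rule card_image[OF injJ])
    have finS: "finite S" using SJ fJ by simp
    have J01: "(0,1) \<in> J" and Jn4: "(n,4) \<in> J"
      using S(2,3) a1 al n unfolding J_def PI_def by auto
    have "J \<noteq> PI n" using S(1) FE SJ by auto
    then obtain q where q: "q \<in> PI n" "q \<notin> J" using JP by blast
    have qD: "q \<in> Dom n" using q J01 Jn4 unfolding Dom_def by auto
    have p1: "proj1 S = r1 x1 y1 \<alpha>1 ` (c1 n ` J)"
      unfolding proj1_def SJ P_def ptp_def by (auto simp: image_image)
    have p2: "proj2 S = r2 x2 y2 \<alpha>2 ` (c2 n ` J)"
      unfolding proj2_def SJ P_def ptp_def by (auto simp: image_image)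
    have p3: "proj3 S = r3 x3 z3 \<alpha>3 ` (c3 n ` J)"
      unfolding proj3_def SJ P_def ptp_def by (auto simp: image_image)
    have s1: "c1 n ` J \<subseteq> K1" and s2: "c2 n ` J \<subseteq> K2" and s3: "c3 n ` J \<subseteq> K3"
      using ranges[OF _ n] JP by blast+
    have "card (proj1 S) = card (c1 n ` J)"
      unfolding p1 by (rule card_image[OF inj_on_subset[OF inj_r1[OF d1] s1]])
    moreover have "card (proj2 S) = card (c2 n ` J)"
      unfolding p2 by (rule card_image[OF inj_on_subset[OF inj_r2[OF d2] s2]])
    moreover have "card (proj3 S) = card (c3 n ` J)"
      unfolding p3 by (rule card_image[OF inj_on_subset[OF inj_r3[OF d3] s3]])
    moreover have "card J + 3 \<le> card (c1 n ` J) + card (c2 n ` J) + card (c3 n ` J)"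
      by (rule comb[OF n JP J01 Jn4 qD q(2)])
    moreover have "card (proj1 S) + card (proj2 S) + card (proj3 S) \<le> card S + 2"
      by (rule full_bound[OF fS finS])
    ultimately show False using cS by simp
  qed
  show ?thesis using main card by blast
qed

end
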